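(* Let $\mathcal{V}$ be a finite vocabulary with $|\mathcal{V}|=N$, let $\varepsilon>0$, and let $L_1,\dots,L_m$ be lists, each containing every word of $\mathcal{V}$ exactly once; let $\Phi^l:\mathcal{V}\to\{0,\dots,N-1\}$ be the bijection giving the index of a word in $L_l$, and $d^l_{\mathcal{V}}(w,w')=|\Phi^l(w)-\Phi^l(w')|$. Put $d_{\max}(w,w')=\max_{1\le l\le m} d^l_{\mathcal{V}}(w,w')$. Define the word-level randomized mechanism $\mathcal{M}:\mathcal{V}\to\mathcal{V}$ as follows: on input $w$, for each $l$ independently draw $X_l$ from the two-sided geometric distribution with $\mathbb{P}[X_l=x]=\frac{e^{\varepsilon}-1}{e^{\varepsilon}+1}e^{-\varepsilon|x|}$ ($x\in\mathbb{Z}$), set $w'_l=(\Phi^l)^{-1}(t(\Phi^l(w)+X_l))$ where $t$ clamps an integer to $\{0,\dots,N-1\}$ (values below $0$ become $0$, values above $N-1$ become $N-1$), and output one of $w'_1,\dots,w'_m$ chosen uniformly at random. Extend $\mathcal{M}$ to sentences $s=w_1\cdots w_n\in\mathcal{V}^n$ by applying it independently to each word, so that $\mathbb{P}[\mathcal{M}(s)=z_1\cdots z_n]=\prod_{i=1}^n\mathbb{P}[\mathcal{M}(w_i)=z_i]$, and for $s=w_1\cdots w_n$, $s'=w'_1\cdots w'_n$ define $\mathcal{D}(s,s')=\sum_{i=1}^n d_{\max}(w_i,w'_i)$. Then for all $n$, all $s,s',z\in\mathcal{V}^n$, $$\frac{\mathbb{P}[\mathcal{M}(s)=z]}{\mathbb{P}[\mathcal{M}(s')=z]}\le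 \exp\big(\varepsilon\,\mathcal{D}(s,s')\big).$$
   Context: Sentences are finite sequences (concatenations) of words from $\mathcal{V}$; $\mathcal{V}^n$ denotes sentences of length $n$. *)

theory Defs
  imports "HOL-Probability.Probability"
begin

definition word_index :: "'a list \<Rightarrow> 'a \<Rightarrow> nat" where
  "word_index xs w = (LEAST i. i < length xs \<and> xs ! i = w)"

definition clamp :: "nat \<Rightarrow> int \<Rightarrow> nat" where
  "clamp N k = nat (max 0 (min (int N - 1) k))"

definition two_sided_geom :: "real \<Rightarrow> int pmf" where
  "two_sided_geom \<epsilon> = embed_pmf (\<lambda>x. (exp \<epsilon> - 1) / (exp \<epsilon> + 1) * exp (- \<epsilon> * real_of_int \<bar>x\<bar>))"

definition word_mech :: "real \<Rightarrow> 'a list list \<Rightarrow> 'a \<Rightarrow> 'a pmf" where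
  "word_mech \<epsilon> L w =
     do { X \<leftarrow> Pi_pmf {..<length L} 0 (\<lambda>_. two_sided_geom \<epsilon>);
          l \<leftarrow> pmf_of_set {..<length L};
          return_pmf ((L ! l) ! clamp (length (L ! l)) (int (word_index (L ! l) w) + X l)) }"

fun sent_mech :: "real \<Rightarrow> 'a list list \<Rightarrow> 'a list \<Rightarrow> 'a list pmf" where
  "sent_mech \<epsilon> L [] = return_pmf []"
| "sent_mech \<epsilon> L (w # ws) =
     do { z \<leftarrow> word_mech \<epsilon> L w; zs \<leftarrow> sent_mech \<epsilon> L ws; return_pmf (z # zs) }"

definition d_list :: "'a list \<Rightarrow> 'a \<Rightarrow> 'a \<Rightarrow> nat" where
  "d_list xs w w' = nat \<bar>int (word_index xs w) - int (word_index xs w')\<bar>"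

definition d_max :: "'a list list \<Rightarrow> 'a \<Rightarrow> 'a \<Rightarrow> nat" where
  "d_max L w w' = Max ((\<lambda>l. d_list (L ! l) w w') ` {..<length L})"

definition sent_dist :: "'a list list \<Rightarrow> 'a list \<Rightarrow> 'a list \<Rightarrow> nat" where
  "sent_dist L s s' = (\<Sum>i<length s. d_max L (s ! i) (s' ! i))"

end

theory Submission
  imports Defs
begin

lemma geom_nat_sum:
  fixes q c :: real assumes "0 \<le> q" "q < 1" "0 \<le> c"
  shows "(\<integral>\<^sup>+n. ennreal (c * q ^ n) \<partial>count_space UNIV) = ennreal (c / (1 - q))"
proof -
  have "(\<lambda>n. c * q ^ n) sums (c * (1 / (1 - q)))"
    using assms by (intro sums_mult geometric_sums) auto
  then show ?thesis
    by (subst nn_integral_count_space_nat) (subst suminf_ennreal_eq, use assms in auto)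
qed

lemma tsg_sum:
  fixes \<epsilon> :: real assumes "\<epsilon> > 0"
  shows "(\<integral>\<^sup>+x. ennreal ((exp \<epsilon> - 1) / (exp \<epsilon> + 1) * exp (- \<epsilon> * real_of_int \<bar>x\<bar>)) \<partial>count_space UNIV) = 1"
proof -
  define c where "c = (exp \<epsilon> - 1) / (exp \<epsilon> + 1)"
  define q where "q = exp (- \<epsilon>)"
  have c0: "c \<ge> 0" unfolding c_def using assms by (simp add: divide_nonneg_pos)
  have q0: "0 < q" "q < 1" unfolding q_def using assms by auto
  define f where "f = (\<lambda>x::int. ennreal (c * exp (- \<epsilon> * real_of_int \<bar>x\<bar>)))"
  have fq: "f x = ennreal (c * q ^ nat \<bar>x\<bar>)" for x
  proof -
    have "exp (- \<epsilon> * real_of_int \<bar>x\<bar>) = exp (real (nat \<bar>x\<bar>) * (- \<epsilon>))" by (simp add: mult.commute)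
    also have "\<dots> = q ^ nat \<bar>x\<bar>" unfolding q_def by (rule exp_of_nat_mult)
    finally show ?thesis unfolding f_def by simp
  qed
  have UN: "(UNIV::int set) = {x. 0 \<le> x} \<union> {x. x < 0}" by auto
  have "(\<integral>\<^sup>+x. f x \<partial>count_space UNIV) = (\<integral>\<^sup>+x\<in>{x. 0 \<le> x}. f x \<partial>count_space UNIV) + (\<integral>\<^sup>+x\<in>{x. x < 0}. f x \<partial>count_space UNIV)"
  proof -
    have "(\<integral>\<^sup>+x. f x \<partial>count_space UNIV) = (\<integral>\<^sup>+x\<in>{x. 0 \<le> x} \<union> {x. x < 0}. f x \<partial>count_space UNIV)"
      by (rule nn_integral_cong) (auto simp: indicator_def)
    also have "\<dots> = (\<integral>\<^sup>+x\<in>{x. 0 \<le> x}. f x \<partial>count_space UNIV) + (\<integral>\<^sup>+x\<in>{x. x < 0}. f x \<partial>count_space UNIV)"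
      by (rule nn_integral_disjoint_pair_countspace) auto
    finally show ?thesis .
  qed
  also have "(\<integral>\<^sup>+x\<in>{x. 0 \<le> x}. f x \<partial>count_space UNIV) = (\<integral>\<^sup>+x. f x \<partial>count_space {x. 0 \<le> x})"
    by (subst nn_integral_count_space_indicator) (auto simp: mult.commute)
  also have "\<dots> = (\<integral>\<^sup>+n. f (int n) \<partial>count_space UNIV)"
  proof (rule nn_integral_bij_count_space[symmetric])
    show "bij_betw int UNIV {x. 0 \<le> x}"
      by (auto simp: bij_betw_def intro: image_eqI[of _ _ "nat _"])
  qed
  also have "\<dots> = (\<integral>\<^sup>+n. ennreal (c * q ^ n) \<partial>count_space UNIV)" by (simp add: fq)
  also have "\<dots> = ennreal (c / (1 - q))" using q0 c0 by (intro geom_nat_sum) auto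
  also have "(\<integral>\<^sup>+x\<in>{x. x < 0}. f x \<partial>count_space UNIV) = (\<integral>\<^sup>+x. f x \<partial>count_space {x. x < 0})"
    by (subst nn_integral_count_space_indicator) (auto simp: mult.commute)
  also have "\<dots> = (\<integral>\<^sup>+n. f (- int (Suc n)) \<partial>count_space UNIV)"
  proof (rule nn_integral_bij_count_space[symmetric])
    show "bij_betw (\<lambda>n. - int (Suc n)) UNIV {x. x < 0}"
      by (auto simp: bij_betw_def inj_def intro!: image_eqI[of _ _ "nat (- _ - 1)"])
  qed
  also have "\<dots> = (\<integral>\<^sup>+n. ennreal ((c * q) * q ^ n) \<partial>count_space UNIV)"
    by (simp add: fq nat_add_distrib mult_ac)
  also have "\<dots> = ennreal (c * q / (1 - q))" using q0 c0 by (intro geom_nat_sum) auto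
  also have "ennreal (c / (1 - q)) + ennreal (c * q / (1 - q)) = ennreal (c / (1 - q) + c * q / (1 - q))"
    using q0 c0 by (intro ennreal_plus[symmetric]) auto
  also have "c / (1 - q) + c * q / (1 - q) = 1"
  proof -
    have qe: "q = 1 / exp \<epsilon>" unfolding q_def by (simp add: exp_minus field_simps)
    have E: "exp \<epsilon> > 1" using assms by simp
    have "c / (1 - q) + c * q / (1 - q) = c * (1 + q) / (1 - q)" by (simp add: add_divide_distrib distrib_left)
    also have "\<dots> = c * (exp \<epsilon> + 1) / (exp \<epsilon> - 1)" unfolding qe using E
      by (simp add: field_simps)
    also have "\<dots> = 1" proof - have "exp \<epsilon> + 1 \<noteq> 0" "exp \<epsilon> - 1 \<noteq> 0" using E by linarith+ then show ?thesis unfolding c_def by simp qed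
    finally show ?thesis .
  qed
  finally show ?thesis unfolding f_def c_def by simp
qed


lemma exp_p1 [simp]: "0 < exp (x::real) + 1"
  by (metis add_pos_pos exp_gt_zero zero_less_one)

definition cG :: "real \<Rightarrow> real" where "cG \<epsilon> = (exp \<epsilon> - 1) / (exp \<epsilon> + 1)"

lemma pmf_tsg:
  assumes "\<epsilon> > 0"
  shows "pmf (two_sided_geom \<epsilon>) x = cG \<epsilon> * exp (- \<epsilon> * real_of_int \<bar>x\<bar>)"
  unfolding two_sided_geom_def cG_def
proof (rule pmf_embed_pmf)
  show "\<And>x. 0 \<le> (exp \<epsilon> - 1) / (exp \<epsilon> + 1) * exp (- \<epsilon> * real_of_int \<bar>x\<bar>)"
    using assms by (intro mult_nonneg_nonneg divide_nonneg_pos) auto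
  show "(\<integral>\<^sup>+x. ennreal ((exp \<epsilon> - 1) / (exp \<epsilon> + 1) * exp (- \<epsilon> * real_of_int \<bar>x\<bar>)) \<partial>count_space UNIV) = 1"
    using tsg_sum[OF assms] .
qed

lemma tsg_ratio:
  fixes a a' y :: int
  assumes "\<epsilon> > 0"
  shows "pmf (two_sided_geom \<epsilon>) (y - a) \<le> exp (\<epsilon> * \<bar>real_of_int (a - a')\<bar>) * pmf (two_sided_geom \<epsilon>) (y - a')"
proof -
  have c0: "cG \<epsilon> \<ge> 0" unfolding cG_def using assms by (intro divide_nonneg_pos) auto
  have "\<bar>real_of_int (y - a')\<bar> \<le> \<bar>real_of_int (y - a)\<bar> + \<bar>real_of_int (a - a')\<bar>" by linarith
  then have "- \<epsilon> * real_of_int \<bar>y - a\<bar> \<le> \<epsilon> * \<bar>real_of_int (a - a')\<bar> + (- \<epsilon> * real_of_int \<bar>y - a'\<bar>)"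
    using assms by (simp add: algebra_simps) (metis distrib_left mult_left_mono less_imp_le)
  then have "exp (- \<epsilon> * real_of_int \<bar>y - a\<bar>) \<le> exp (\<epsilon> * \<bar>real_of_int (a - a')\<bar>) * exp (- \<epsilon> * real_of_int \<bar>y - a'\<bar>)"
    by (simp add: exp_add[symmetric])
  then show ?thesis using c0 by (simp add: pmf_tsg[OF assms] mult_left_mono mult.left_commute)
qed

lemma pmf_dom:
  fixes p q :: "'b pmf"
  assumes "\<And>x. pmf p x \<le> C * pmf q x"
  shows "measure_pmf.prob p A \<le> C * measure_pmf.prob q A"
proof -
  have "measure_pmf.prob p A = infsetsum (pmf p) A" by (rule measure_pmf_conv_infsetsum)
  also have "\<dots> \<le> infsetsum (\<lambda>x. C * pmf q x) A"
    by (rule infsetsum_mono) (auto intro: abs_summable_on_cmult_right assms)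
  also have "\<dots> = C * infsetsum (pmf q) A" by (rule infsetsum_cmult_right) auto
  also have "\<dots> = C * measure_pmf.prob q A" by (simp add: measure_pmf_conv_infsetsum)
  finally show ?thesis .
qed

lemma shift_bound:
  fixes a a' :: int and h :: "int \<Rightarrow> 'b"
  assumes "\<epsilon> > 0"
  shows "pmf (map_pmf (\<lambda>x. h (a + x)) (two_sided_geom \<epsilon>)) z
     \<le> exp (\<epsilon> * \<bar>real_of_int (a - a')\<bar>) * pmf (map_pmf (\<lambda>x. h (a' + x)) (two_sided_geom \<epsilon>)) z"
proof -
  have sh: "pmf (map_pmf (\<lambda>x. b + x) (two_sided_geom \<epsilon>)) y = pmf (two_sided_geom \<epsilon>) (y - b)" for b y :: int
  proof -
    have "inj (\<lambda>x::int. b + x)" by (auto simp: inj_def)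
    from pmf_map_inj'[OF this, of "two_sided_geom \<epsilon>" "y - b"] show ?thesis by simp
  qed
  have e: "map_pmf (\<lambda>x. h (b + x)) (two_sided_geom \<epsilon>) = map_pmf h (map_pmf (\<lambda>x. b + x) (two_sided_geom \<epsilon>))" for b
    by (simp add: map_pmf_comp)
  show ?thesis unfolding e pmf_map
    by (rule pmf_dom, unfold sh, rule tsg_ratio[OF assms])
qed

definition gw :: "'a list list \<Rightarrow> nat \<Rightarrow> 'a \<Rightarrow> int \<Rightarrow> 'a" where
  "gw L l w x = (L ! l) ! clamp (length (L ! l)) (int (word_index (L ! l) w) + x)"

lemma word_mech_alt:
  assumes "length L \<ge> 1"
  shows "pmf (word_mech \<epsilon> L w) z = (\<Sum>l<length L. pmf (map_pmf (gw L l w) (two_sided_geom \<epsilon>)) z) / real (length L)"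
proof -
  let ?P = "Pi_pmf {..<length L} 0 (\<lambda>_. two_sided_geom \<epsilon>)"
  have "word_mech \<epsilon> L w = pmf_of_set {..<length L} \<bind> (\<lambda>l. ?P \<bind> (\<lambda>X. return_pmf (gw L l w (X l))))"
    unfolding word_mech_def gw_def by (rule bind_commute_pmf)
  also have "\<dots> = pmf_of_set {..<length L} \<bind> (\<lambda>l. map_pmf (gw L l w) (two_sided_geom \<epsilon>))"
  proof (rule bind_pmf_cong[OF refl])
    fix l assume "l \<in> set_pmf (pmf_of_set {..<length L})"
    then have l: "l < length L" using assms by (subst (asm) set_pmf_of_set) (auto simp: lessThan_empty_iff)
    have "?P \<bind> (\<lambda>X. return_pmf (gw L l w (X l))) = map_pmf (gw L l w) (map_pmf (\<lambda>X. X l) ?P)"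
      by (simp add: map_pmf_def bind_assoc_pmf bind_return_pmf)
    also have "\<dots> = map_pmf (gw L l w) (two_sided_geom \<epsilon>)"
      using l by (subst Pi_pmf_component) auto
    finally show "?P \<bind> (\<lambda>X. return_pmf (gw L l w (X l))) = map_pmf (gw L l w) (two_sided_geom \<epsilon>)" .
  qed
  moreover have ne: "{..<length L} \<noteq> {}" using assms by (auto simp: lessThan_empty_iff)
  ultimately show ?thesis by (simp add: pmf_bind_pmf_of_set[OF ne])
qed

lemma word_bound:
  assumes "length L \<ge> 1" "\<epsilon> > 0"
  shows "pmf (word_mech \<epsilon> L w) z \<le> exp (\<epsilon> * real (d_max L w w')) * pmf (word_mech \<epsilon> L w') z"
proof -
  let ?Q = "\<lambda>l w. pmf (map_pmf (gw L l w) (two_sided_geom \<epsilon>)) z"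
  have "(\<Sum>l<length L. ?Q l w) \<le> (\<Sum>l<length L. exp (\<epsilon> * real (d_max L w w')) * ?Q l w')"
  proof (rule sum_mono)
    fix l assume "l \<in> {..<length L}"
    then have dl: "d_list (L ! l) w w' \<le> d_max L w w'" unfolding d_max_def by (intro Max_ge) auto
    have "?Q l w \<le> exp (\<epsilon> * \<bar>real_of_int (int (word_index (L ! l) w) - int (word_index (L ! l) w'))\<bar>) * ?Q l w'"
      unfolding gw_def by (rule shift_bound[OF assms(2)])
    also have "\<bar>real_of_int (int (word_index (L ! l) w) - int (word_index (L ! l) w'))\<bar> = real (d_list (L ! l) w w')"
      unfolding d_list_def by simp
    also have "exp (\<epsilon> * real (d_list (L ! l) w w')) * ?Q l w' \<le> exp (\<epsilon> * real (d_max L w w')) * ?Q l w'"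
      using dl assms by (intro mult_right_mono) auto
    finally show "?Q l w \<le> exp (\<epsilon> * real (d_max L w w')) * ?Q l w'" .
  qed
  then have "(\<Sum>l<length L. ?Q l w) / real (length L) \<le> (exp (\<epsilon> * real (d_max L w w')) * (\<Sum>l<length L. ?Q l w')) / real (length L)"
    by (simp add: sum_distrib_left divide_right_mono)
  then show ?thesis using assms by (simp add: word_mech_alt)
qed

lemma sent_cons:
  "sent_mech \<epsilon> L (w # ws) = map_pmf (\<lambda>(a, b). a # b) (pair_pmf (word_mech \<epsilon> L w) (sent_mech \<epsilon> L ws))"
  by (simp add: pair_pmf_def map_bind_pmf map_return_pmf)

lemma pmf_sent_cons:
  "pmf (sent_mech \<epsilon> L (w # ws)) (y # ys) = pmf (word_mech \<epsilon> L w) y * pmf (sent_mech \<epsilon> L ws) ys"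
proof -
  have "inj (\<lambda>(a::'a, b). a # b)" by (auto simp: inj_def)
  from pmf_map_inj'[OF this, of _ "(y, ys)"] show ?thesis unfolding sent_cons by (simp add: pmf_pair)
qed

lemma pmf_sent_nil:
  "pmf (sent_mech \<epsilon> L (w # ws)) [] = 0"
proof -
  have "(\<lambda>(x::'a, y). x # y) -` {[]} = {}" by auto
  then show ?thesis unfolding sent_cons by (simp add: pmf_map)
qed

lemma sent_bound:
  assumes "length L \<ge> 1" "\<epsilon> > 0" "length s' = length s"
  shows "pmf (sent_mech \<epsilon> L s) z \<le> exp (\<epsilon> * real (sent_dist L s s')) * pmf (sent_mech \<epsilon> L s') z"
  using assms(3)[symmetric]
proof (induction s s' arbitrary: z rule: list_induct2)
  case Nil
  then show ?case by (simp add: sent_dist_def)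
next
  case (Cons w ws w' ws')
  have sd: "sent_dist L (w # ws) (w' # ws') = d_max L w w' + sent_dist L ws ws'"
    unfolding sent_dist_def length_Cons sum.lessThan_Suc_shift by simp
  show ?case
  proof (cases z)
    case Nil
    then show ?thesis unfolding Nil pmf_sent_nil by simp
  next
    case (Cons y ys)
    have "pmf (word_mech \<epsilon> L w) y * pmf (sent_mech \<epsilon> L ws) ys
      \<le> (exp (\<epsilon> * real (d_max L w w')) * pmf (word_mech \<epsilon> L w') y) * (exp (\<epsilon> * real (sent_dist L ws ws')) * pmf (sent_mech \<epsilon> L ws') ys)"
      by (intro mult_mono word_bound assms Cons.IH) auto
    then show ?thesis unfolding Cons pmf_sent_cons sd by (simp add: distrib_left exp_add mult_ac)
  qed
qed

theorem theorem3p2: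
  fixes V :: "'a set" and N m n :: nat and \<epsilon> :: real
    and L :: "'a list list" and s s' z :: "'a list"
  assumes "finite V" and "card V = N" and "\<epsilon> > 0"
    and "m \<ge> 1" and "length L = m"
    and "\<forall>l<m. distinct (L ! l) \<and> set (L ! l) = V"
    and "length s = n" and "length s' = n" and "length z = n"
    and "set s \<subseteq> V" and "set s' \<subseteq> V" and "set z \<subseteq> V"
  shows "pmf (sent_mech \<epsilon> L s) z / pmf (sent_mech \<epsilon> L s') z
           \<le> exp (\<epsilon> * real (sent_dist L s s'))"
proof -
  have b: "pmf (sent_mech \<epsilon> L s) z \<le> exp (\<epsilon> * real (sent_dist L s s')) * pmf (sent_mech \<epsilon> L s') z"
    using assms by (intro sent_bound) auto
  show ?thesis
  proof (cases "pmf (sent_mech \<epsilon> L s') z = 0")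
    case True then show ?thesis by simp
  next
    case False
    then have "pmf (sent_mech \<epsilon> L s') z > 0" using pmf_nonneg[of "sent_mech \<epsilon> L s'" z] by linarith
    then show ?thesis using b by (simp add: divide_le_eq)
  qed
qed

end
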